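(* Let $\mathcal{Q}\subseteq\Delta_{N\times M}$ be a nonempty compact convex set consisting only of weakly symmetric channels. Then the robust capacity equals $$\sup_{p\in\Delta_N}\inf_{Q\in\mathcal{Q}}I(p,Q)=\min_{Q\in\mathcal{Q}}\left[\log N+\sum_{m=1}^M Q_{1m}\log\frac{Q_{1m}}{\sum_{l=1}^N Q_{lm}}\right],$$ i.e. the upper bound $\min_{Q\in\mathcal{Q}}\left[\log N+\max_{n}\sum_{m} Q_{nm}\log\frac{Q_{nm}}{\sum_{l} Q_{lm}}\right]$ is attained.
   Context: $\Delta_N$ is the probability simplex in $\mathbb{R}^N$; $\Delta_{N\times M}$ is the set of $N\times M$ nonnegative matrices with each row summing to $1$. $I(p,Q)=\sum_{n,m}p_nQ_{nm}\log\frac{Q_{nm}}{\sum_l p_lQ_{lm}}$, with terms where $p_nQ_{nm}=0$ equal to zero and $0\log 0=0$. A channel $Q\in\Delta_{N\times M}$ is weakly symmetric if every row of $Q$ is a permutation of every other row and all column sums $\sum_{l=1}^N Q_{lm}$, $m=1,\dots,M$, are equal (hence equal to $N/M$). *)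

theory Defs
  imports "HOL-Analysis.Analysis"
begin

text \<open>Indices are 0-based: rows 0..N-1, columns 0..M-1. Vectors/matrices are
  represented as functions that vanish outside the index range (extensional), so
  that the product topology on nat \<Rightarrow> nat \<Rightarrow> real restricted to
  channels is the Euclidean topology of R^(N x M).\<close>

definition prob_simplex :: "nat \<Rightarrow> (nat \<Rightarrow> real) set" where
  "prob_simplex N = {p. (\<forall>n<N. 0 \<le> p n) \<and> (\<forall>n\<ge>N. p n = 0) \<and> (\<Sum>n<N. p n) = 1}"

definition channels :: "nat \<Rightarrow> nat \<Rightarrow> (nat \<Rightarrow> nat \<Rightarrow> real) set" where
  "channels N M = {Q. (\<forall>n<N. \<forall>m<M. 0 \<le> Q n m)
      \<and> (\<forall>n m. (n \<ge> N \<or> m \<ge> M) \<longrightarrow> Q n m = 0)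
      \<and> (\<forall>n<N. (\<Sum>m<M. Q n m) = 1)}"

definition mutual_info :: "nat \<Rightarrow> nat \<Rightarrow> (nat \<Rightarrow> real) \<Rightarrow> (nat \<Rightarrow> nat \<Rightarrow> real) \<Rightarrow> real" where
  "mutual_info N M p Q = (\<Sum>n<N. \<Sum>m<M.
      (if p n * Q n m = 0 then 0
       else p n * Q n m * ln (Q n m / (\<Sum>l<N. p l * Q l m))))"

definition col_sum :: "nat \<Rightarrow> (nat \<Rightarrow> nat \<Rightarrow> real) \<Rightarrow> nat \<Rightarrow> real" where
  "col_sum N Q m = (\<Sum>l<N. Q l m)"

definition weakly_symmetric :: "nat \<Rightarrow> nat \<Rightarrow> (nat \<Rightarrow> nat \<Rightarrow> real) \<Rightarrow> bool" where
  "weakly_symmetric N M Q \<longleftrightarrow>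
     (\<forall>n<N. \<forall>n'<N. \<exists>\<sigma>. \<sigma> permutes {..<M} \<and> (\<forall>m<M. Q n' m = Q n (\<sigma> m)))
     \<and> (\<forall>m<M. \<forall>m'<M. col_sum N Q m = col_sum N Q m')"

definition convex_chan_set :: "(nat \<Rightarrow> nat \<Rightarrow> real) set \<Rightarrow> bool" where
  "convex_chan_set S \<longleftrightarrow> (\<forall>Q1\<in>S. \<forall>Q2\<in>S. \<forall>t::real. 0 \<le> t \<and> t \<le> 1 \<longrightarrow>
      (\<lambda>n m. t * Q1 n m + (1 - t) * Q2 n m) \<in> S)"

text \<open>The bracketed quantity, evaluated on the first row (index 0), with 0 log 0 = 0.\<close>
definition sym_value :: "nat \<Rightarrow> nat \<Rightarrow> (nat \<Rightarrow> nat \<Rightarrow> real) \<Rightarrow> real" where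
  "sym_value N M Q = ln (real N) + (\<Sum>m<M.
      (if Q 0 m = 0 then 0 else Q 0 m * ln (Q 0 m / col_sum N Q m)))"

end

theory Submission
  imports Defs "HOL-Real_Asymp.Real_Asymp"
begin

lemma xlnx_cont: "continuous_on {0..} (\<lambda>x::real. x * ln x)"
proof -
  have "continuous (at x within {0..}) (\<lambda>x::real. x * ln x)" if "x \<ge> 0" for x
  proof (cases "x = 0")
    case True
    have "((\<lambda>x::real. x * ln x) \<longlongrightarrow> 0) (at_right 0)" by real_asymp
    then have "((\<lambda>x::real. x * ln x) \<longlongrightarrow> 0) (at 0 within {0..})"
      by (metis at_within_Ici_at_right)
    then show ?thesis using True by (simp add: continuous_within)
  next
    case False
    then have "isCont (\<lambda>x::real. x * ln x) x" using that by (intro continuous_intros) auto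
    then show ?thesis using continuous_at_imp_continuous_at_within by blast
  qed
  then show ?thesis by (simp add: continuous_on_eq_continuous_within)
qed

lemma proj_cont: "continuous_on S (\<lambda>Q::nat\<Rightarrow>nat\<Rightarrow>real. Q i j)"
proof -
  have "continuous_on UNIV (\<lambda>Q::nat\<Rightarrow>nat\<Rightarrow>real. Q i)" by (rule continuous_on_product_coordinates)
  moreover have "continuous_on UNIV (\<lambda>f::nat\<Rightarrow>real. f j)" by (rule continuous_on_product_coordinates)
  ultimately have "continuous_on UNIV ((\<lambda>f::nat\<Rightarrow>real. f j) \<circ> (\<lambda>Q::nat\<Rightarrow>nat\<Rightarrow>real. Q i))"
    by (rule continuous_on_compose[OF _ continuous_on_subset]) auto
  then show ?thesis by (auto simp: o_def intro: continuous_on_subset)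
qed

lemma gibbs:
  assumes "M > 0" "\<forall>m<M. 0 \<le> q m" "(\<Sum>m<M. q m) = 1"
  shows "- ln (real M) \<le> (\<Sum>m<M. q m * ln (q m))"
proof -
  have t: "- q m * ln (real M) - q m * ln (q m) \<le> 1 / real M - q m" if "m < M" for m
  proof (cases "q m = 0")
    case True then show ?thesis using assms(1) by simp
  next
    case False
    then have qp: "q m > 0" using assms(2) that by force
    have Mp: "real M > 0" using assms(1) by simp
    have "ln (1 / (real M * q m)) \<le> 1 / (real M * q m) - 1"
      by (rule ln_le_minus_one) (use qp Mp in simp)
    moreover have "ln (1 / (real M * q m)) = - ln (real M) - ln (q m)"
      using qp Mp by (simp add: ln_div ln_mult)
    ultimately have "- ln (real M) - ln (q m) \<le> 1 / (real M * q m) - 1" by simp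
    then have "q m * (- ln (real M) - ln (q m)) \<le> q m * (1 / (real M * q m) - 1)"
      using qp by (simp add: mult_left_mono)
    then show ?thesis using qp by (simp add: algebra_simps)
  qed
  have "(\<Sum>m<M. - q m * ln (real M) - q m * ln (q m)) \<le> (\<Sum>m<M. 1 / real M - q m)"
    by (rule sum_mono) (use t in auto)
  also have "\<dots> = 0" using assms by (simp add: sum_subtractf)
  finally have "(\<Sum>m<M. - q m * ln (real M) - q m * ln (q m)) \<le> 0" .
  moreover have "(\<Sum>m<M. - q m * ln (real M) - q m * ln (q m)) = - ln (real M) - (\<Sum>m<M. q m * ln (q m))"
    using assms(3) by (simp add: sum_subtractf sum_negf flip: sum_distrib_right)
  ultimately show ?thesis by simp
qed

lemma mi_formula:
  assumes p: "p \<in> prob_simplex N" and Q: "Q \<in> channels N M"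
  shows "mutual_info N M p Q = (\<Sum>n<N. p n * (\<Sum>m<M. Q n m * ln (Q n m)))
           - (\<Sum>m<M. (\<Sum>l<N. p l * Q l m) * ln (\<Sum>l<N. p l * Q l m))"
proof -
  let ?q = "\<lambda>m. \<Sum>l<N. p l * Q l m"
  have pn: "\<forall>n<N. 0 \<le> p n" using p by (simp add: prob_simplex_def)
  have Qn: "\<forall>n<N. \<forall>m<M. 0 \<le> Q n m" using Q by (simp add: channels_def)
  have tm: "(if p n * Q n m = 0 then 0 else p n * Q n m * ln (Q n m / ?q m))
      = p n * (Q n m * ln (Q n m)) - p n * Q n m * ln (?q m)" if "n < N" "m < M" for n m
  proof (cases "p n * Q n m = 0")
    case True then show ?thesis by auto
  next
    case False
    then have pp: "p n > 0" and qq: "Q n m > 0" using pn Qn that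
      by (metis less_eq_real_def mult_zero_left mult_zero_right)+
    have "p n * Q n m \<le> ?q m"
      by (rule member_le_sum[where f = "\<lambda>l. p l * Q l m"]) (use pn Qn that in auto)
    then have "?q m > 0" using pp qq by (smt (verit) mult_pos_pos)
    then show ?thesis using False qq by (simp add: ln_div algebra_simps)
  qed
  have "mutual_info N M p Q = (\<Sum>n<N. \<Sum>m<M. p n * (Q n m * ln (Q n m)) - p n * Q n m * ln (?q m))"
    unfolding mutual_info_def by (intro sum.cong refl) (rule tm; simp)
  also have "\<dots> = (\<Sum>n<N. p n * (\<Sum>m<M. Q n m * ln (Q n m))) - (\<Sum>n<N. \<Sum>m<M. p n * Q n m * ln (?q m))"
    by (simp add: sum_subtractf sum_distrib_left)
  also have "(\<Sum>n<N. \<Sum>m<M. p n * Q n m * ln (?q m)) = (\<Sum>m<M. ?q m * ln (?q m))"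
    by (subst sum.swap) (simp add: sum_distrib_right)
  finally show ?thesis .
qed

lemma row_perm:
  assumes "weakly_symmetric N M Q" "n < N" "0 < N"
  shows "(\<Sum>m<M. f (Q n m)) = (\<Sum>m<M. f (Q 0 m))"
proof -
  obtain \<sigma> where s: "\<sigma> permutes {..<M}" "\<forall>m<M. Q n m = Q 0 (\<sigma> m)"
    using assms unfolding weakly_symmetric_def by blast
  have "(\<Sum>m<M. f (Q n m)) = (\<Sum>m<M. ((\<lambda>m. f (Q 0 m)) \<circ> \<sigma>) m)"
    using s(2) by (intro sum.cong) auto
  also have "\<dots> = (\<Sum>m<M. f (Q 0 m))" by (rule sum.permute[OF s(1), symmetric])
  finally show ?thesis .
qed

lemma colsum_const:
  assumes Q: "Q \<in> channels N M" and ws: "weakly_symmetric N M Q" and M: "0 < M" and m: "m < M"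
  shows "col_sum N Q m = real N / real M"
proof -
  have eq: "\<forall>m'<M. col_sum N Q m' = col_sum N Q m" using ws m unfolding weakly_symmetric_def by blast
  have "(\<Sum>m'<M. col_sum N Q m') = (\<Sum>l<N. \<Sum>m'<M. Q l m')"
    unfolding col_sum_def by (rule sum.swap)
  also have "\<dots> = real N" using Q by (simp add: channels_def)
  finally have "(\<Sum>m'<M. col_sum N Q m') = real N" .
  moreover have "(\<Sum>m'<M. col_sum N Q m') = real M * col_sum N Q m" using eq by simp
  ultimately show ?thesis using M by (simp add: field_simps)
qed

lemma symval_formula:
  assumes Q: "Q \<in> channels N M" and ws: "weakly_symmetric N M Q" and N: "0 < N" and M: "0 < M"
  shows "sym_value N M Q = ln (real M) + (\<Sum>m<M. Q 0 m * ln (Q 0 m))"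
proof -
  have c: "\<And>m. m < M \<Longrightarrow> col_sum N Q m = real N / real M" using colsum_const[OF Q ws M] by blast
  have Qn: "\<forall>m<M. 0 \<le> Q 0 m" using Q N by (simp add: channels_def)
  have r1: "(\<Sum>m<M. Q 0 m) = 1" using Q N by (simp add: channels_def)
  have t: "(if Q 0 m = 0 then 0 else Q 0 m * ln (Q 0 m / col_sum N Q m))
      = Q 0 m * ln (Q 0 m) - Q 0 m * ln (real N / real M)" if "m < M" for m
  proof (cases "Q 0 m = 0")
    case True then show ?thesis by simp
  next
    case False
    then have "Q 0 m > 0" using Qn that by force
    then show ?thesis using False c[OF that] N M by (simp add: ln_div ln_mult algebra_simps)
  qed
  have "sym_value N M Q = ln (real N) + (\<Sum>m<M. Q 0 m * ln (Q 0 m) - Q 0 m * ln (real N / real M))"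
    unfolding sym_value_def by (simp add: t)
  also have "\<dots> = ln (real N) + (\<Sum>m<M. Q 0 m * ln (Q 0 m)) - ln (real N / real M)"
    using r1 by (simp add: sum_subtractf flip: sum_distrib_right)
  also have "\<dots> = ln (real M) + (\<Sum>m<M. Q 0 m * ln (Q 0 m))"
    using N M by (simp add: ln_div)
  finally show ?thesis .
qed

lemma first_term:
  assumes p: "p \<in> prob_simplex N" and ws: "weakly_symmetric N M Q" and N: "0 < N"
  shows "(\<Sum>n<N. p n * (\<Sum>m<M. Q n m * ln (Q n m))) = (\<Sum>m<M. Q 0 m * ln (Q 0 m))"
proof -
  have "(\<Sum>n<N. p n * (\<Sum>m<M. Q n m * ln (Q n m))) = (\<Sum>n<N. p n * (\<Sum>m<M. Q 0 m * ln (Q 0 m)))"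
  proof (intro sum.cong refl)
    fix n assume "n \<in> {..<N}"
    then have "(\<Sum>m<M. Q n m * ln (Q n m)) = (\<Sum>m<M. Q 0 m * ln (Q 0 m))"
      using row_perm[where f="\<lambda>x. x * ln x", OF ws _ N, of n] by simp
    then show "p n * (\<Sum>m<M. Q n m * ln (Q n m)) = p n * (\<Sum>m<M. Q 0 m * ln (Q 0 m))" by simp
  qed
  also have "\<dots> = (\<Sum>m<M. Q 0 m * ln (Q 0 m))"
    using p by (simp add: prob_simplex_def flip: sum_distrib_right)
  finally show ?thesis .
qed

lemma q_props:
  assumes p: "p \<in> prob_simplex N" and Q: "Q \<in> channels N M"
  shows "(\<Sum>m<M. \<Sum>l<N. p l * Q l m) = 1"
    and "\<And>m. m < M \<Longrightarrow> 0 \<le> (\<Sum>l<N. p l * Q l m)"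
    and "\<And>m. m < M \<Longrightarrow> (\<Sum>l<N. p l * Q l m) \<le> 1"
proof -
  have pn: "\<forall>n<N. 0 \<le> p n" and ps: "(\<Sum>n<N. p n) = 1" using p by (auto simp: prob_simplex_def)
  have Qn: "\<forall>n<N. \<forall>m<M. 0 \<le> Q n m" and Qs: "\<forall>n<N. (\<Sum>m<M. Q n m) = 1"
    using Q by (auto simp: channels_def)
  have "(\<Sum>m<M. \<Sum>l<N. p l * Q l m) = (\<Sum>l<N. p l * (\<Sum>m<M. Q l m))"
    by (subst sum.swap) (simp add: sum_distrib_left)
  also have "\<dots> = 1" using Qs ps by simp
  finally show "(\<Sum>m<M. \<Sum>l<N. p l * Q l m) = 1" .
  show "0 \<le> (\<Sum>l<N. p l * Q l m)" if "m < M" for m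
    using pn Qn that by (intro sum_nonneg) auto
  show "(\<Sum>l<N. p l * Q l m) \<le> 1" if "m < M" for m
  proof -
    have "Q l m \<le> 1" if "l < N" for l
    proof -
      have "Q l m \<le> (\<Sum>m<M. Q l m)"
        by (rule member_le_sum) (use Qn that \<open>m < M\<close> in auto)
      then show ?thesis using Qs that by simp
    qed
    then have "(\<Sum>l<N. p l * Q l m) \<le> (\<Sum>l<N. p l * 1)"
      using pn by (intro sum_mono mult_left_mono) auto
    then show ?thesis using ps by simp
  qed
qed

lemma mi_upper:
  assumes p: "p \<in> prob_simplex N" and Q: "Q \<in> channels N M" and ws: "weakly_symmetric N M Q"
    and N: "0 < N" and M: "0 < M"
  shows "mutual_info N M p Q \<le> sym_value N M Q"
proof -
  have "- ln (real M) \<le> (\<Sum>m<M. (\<Sum>l<N. p l * Q l m) * ln (\<Sum>l<N. p l * Q l m))"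
    by (rule gibbs[where q="\<lambda>m. \<Sum>l<N. p l * Q l m", OF M]) (use q_props[OF p Q] in auto)
  then show ?thesis
    using mi_formula[OF p Q] first_term[OF p ws N] symval_formula[OF Q ws N M] by simp
qed

lemma mi_lower:
  assumes p: "p \<in> prob_simplex N" and Q: "Q \<in> channels N M" and ws: "weakly_symmetric N M Q"
    and N: "0 < N" and M: "0 < M"
  shows "- ln (real M) \<le> mutual_info N M p Q"
proof -
  have g: "- ln (real M) \<le> (\<Sum>m<M. Q 0 m * ln (Q 0 m))"
    by (rule gibbs[OF M]) (use Q N in \<open>auto simp: channels_def\<close>)
  have "(\<Sum>l<N. p l * Q l m) * ln (\<Sum>l<N. p l * Q l m) \<le> 0" if "m < M" for m
  proof -
    have a: "0 \<le> (\<Sum>l<N. p l * Q l m)" and b: "(\<Sum>l<N. p l * Q l m) \<le> 1"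
      using q_props[OF p Q] that by auto
    have "ln (\<Sum>l<N. p l * Q l m) \<le> 0"
      using a b by (cases "(\<Sum>l<N. p l * Q l m) = 0") auto
    then show ?thesis using a by (simp add: mult_nonneg_nonpos)
  qed
  then have "(\<Sum>m<M. (\<Sum>l<N. p l * Q l m) * ln (\<Sum>l<N. p l * Q l m)) \<le> 0"
    by (intro sum_nonpos) auto
  then show ?thesis using mi_formula[OF p Q] first_term[OF p ws N] g by simp
qed

lemma mi_uniform:
  assumes Q: "Q \<in> channels N M" and ws: "weakly_symmetric N M Q"
    and N: "0 < N" and M: "0 < M"
  defines "u \<equiv> (\<lambda>n. if n < N then 1 / real N else 0)"
  shows "u \<in> prob_simplex N" and "mutual_info N M u Q = sym_value N M Q"
proof -
  show u: "u \<in> prob_simplex N" using N by (simp add: prob_simplex_def u_def)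
  have q: "(\<Sum>l<N. u l * Q l m) = 1 / real M" if "m < M" for m
  proof -
    have "(\<Sum>l<N. u l * Q l m) = (\<Sum>l<N. Q l m) / real N"
      by (simp add: u_def sum_divide_distrib)
    also have "\<dots> = 1 / real M"
      using colsum_const[OF Q ws M that] N unfolding col_sum_def by simp
    finally show ?thesis .
  qed
  have "(\<Sum>m<M. (\<Sum>l<N. u l * Q l m) * ln (\<Sum>l<N. u l * Q l m)) = (\<Sum>m<M. 1 / real M * ln (1 / real M))"
    by (intro sum.cong) (auto simp: q)
  also have "\<dots> = - ln (real M)" using M by (simp add: ln_div)
  finally show "mutual_info N M u Q = sym_value N M Q"
    using mi_formula[OF u Q] first_term[OF u ws N] symval_formula[OF Q ws N M] by simp
qed

theorem proposition3:
  fixes N M :: nat and \<Q> :: "(nat \<Rightarrow> nat \<Rightarrow> real) set"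
  assumes "0 < N" and "0 < M"
    and "\<Q> \<noteq> {}" and "\<Q> \<subseteq> channels N M"
    and "compact \<Q>" and "convex_chan_set \<Q>"
    and "\<forall>Q\<in>\<Q>. weakly_symmetric N M Q"
  shows "\<exists>Q0\<in>\<Q>. (\<forall>Q\<in>\<Q>. sym_value N M Q0 \<le> sym_value N M Q)
           \<and> (SUP p\<in>prob_simplex N. INF Q\<in>\<Q>. mutual_info N M p Q) = sym_value N M Q0"
proof -
  note N = assms(1) and M = assms(2)
  have ch: "\<And>Q. Q \<in> \<Q> \<Longrightarrow> Q \<in> channels N M" using assms(4) by blast
  have ws: "\<And>Q. Q \<in> \<Q> \<Longrightarrow> weakly_symmetric N M Q" using assms(7) by blast
  let ?g = "\<lambda>Q::nat\<Rightarrow>nat\<Rightarrow>real. ln (real M) + (\<Sum>m<M. Q 0 m * ln (Q 0 m))"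
  have cm: "continuous_on \<Q> (\<lambda>Q::nat\<Rightarrow>nat\<Rightarrow>real. Q 0 m * ln (Q 0 m))" for m
  proof (rule continuous_on_compose2[OF xlnx_cont proj_cont])
    show "(\<lambda>Q::nat\<Rightarrow>nat\<Rightarrow>real. Q 0 m) ` \<Q> \<subseteq> {0..}"
    proof (cases "m < M")
      case True then show ?thesis using ch N by (auto simp: channels_def)
    next
      case False then show ?thesis using ch by (force simp: channels_def)
    qed
  qed
  have "continuous_on \<Q> ?g"
    by (intro continuous_on_add continuous_on_const continuous_on_sum cm)
  then obtain Q0 where Q0: "Q0 \<in> \<Q>" "\<forall>Q\<in>\<Q>. ?g Q0 \<le> ?g Q"
    using continuous_attains_inf[OF assms(5) assms(3)] by blast
  have sv: "\<And>Q. Q \<in> \<Q> \<Longrightarrow> sym_value N M Q = ?g Q"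
    using symval_formula[OF ch ws N M] by blast
  have min: "\<forall>Q\<in>\<Q>. sym_value N M Q0 \<le> sym_value N M Q" using Q0 sv by simp
  define F where "F p = (INF Q\<in>\<Q>. mutual_info N M p Q)" for p
  have bdd: "bdd_below ((\<lambda>Q. mutual_info N M p Q) ` \<Q>)" if "p \<in> prob_simplex N" for p
    using mi_lower[OF that ch ws N M] by (intro bdd_belowI2) auto
  have Fle: "F p \<le> sym_value N M Q0" if "p \<in> prob_simplex N" for p
  proof -
    have "F p \<le> mutual_info N M p Q0" unfolding F_def by (rule cINF_lower[OF bdd[OF that] Q0(1)])
    also have "\<dots> \<le> sym_value N M Q0" by (rule mi_upper[OF that ch[OF Q0(1)] ws[OF Q0(1)] N M])
    finally show ?thesis .
  qed
  define u where "u = (\<lambda>n. if n < N then 1 / real N else 0)"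
  have u: "u \<in> prob_simplex N" using mi_uniform(1)[OF ch[OF Q0(1)] ws[OF Q0(1)] N M] u_def by simp
  have mu: "\<And>Q. Q \<in> \<Q> \<Longrightarrow> mutual_info N M u Q = sym_value N M Q"
    using mi_uniform(2)[OF ch ws N M] u_def by simp
  have Fu: "sym_value N M Q0 \<le> F u"
    unfolding F_def using min mu assms(3) by (intro cINF_greatest) auto
  have "(SUP p\<in>prob_simplex N. F p) = sym_value N M Q0"
  proof (rule antisym)
    show "(SUP p\<in>prob_simplex N. F p) \<le> sym_value N M Q0"
      using u Fle by (intro cSUP_least) auto
    have "bdd_above (F ` prob_simplex N)" using Fle by (intro bdd_aboveI2) auto
    then show "sym_value N M Q0 \<le> (SUP p\<in>prob_simplex N. F p)"
      using Fu u by (intro cSUP_upper2) auto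
  qed
  then show ?thesis using Q0(1) min unfolding F_def by blast
qed

end
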